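(* Let $\mathcal{A}$ be a finite alphabet and $\mathbf{p},\mathbf{q}$ standard pairs on $\mathcal{A}$ such that $\mathbf{p}$ is of Type $\langle2\rangle$ and $\mathbf{q}$ is of Type $\langle4\rangle$ or of Type $\langle5\rangle$. Then the non-labeled extended Rauzy classes of $\mathbf{p}$ and $\mathbf{q}$ are different.
   Context: Let $n=\#\mathcal{A}\ge2$. A pair is $\mathbf{p}=(p_0,p_1)$ with $p_0,p_1:\mathcal{A}\to\{1,\dots,n\}$ bijections. Irreducible: $p_0^{-1}\{1,\dots,k\}\ne p_1^{-1}\{1,\dots,k\}$ for $1\le k<n$. Rauzy move of type $\varepsilon$: $\varepsilon\mathbf{p}=(p'_0,p'_1)$, $p'_\varepsilon=p_\varepsilon$, and for $z=p_\varepsilon^{-1}(n)$, $p'_{1-\varepsilon}(b)=p_{1-\varepsilon}(b)$ if $p_{1-\varepsilon}(b)\le p_{1-\varepsilon}(z)$, $=p_{1-\varepsilon}(b)+1$ if $p_{1-\varepsilon}(z)<p_{1-\varepsilon}(b)<n$, $=p_{1-\varepsilon}(z)+1$ if $p_{1-\varepsilon}(b)=n$. Left Rauzy move of type $\varepsilon$: $\tilde\varepsilon\mathbf{p}=(p'_0,p'_1)$, $p'_\varepsilon=p_\varepsilon$, and for $a=p_\varepsilon^{-1}(1)$, $p'_{1-\varepsilon}(b)=p_{1-\varepsilon}(a)-1$ if $p_{1-\varepsilon}(b)=1$, $=p_{1-\varepsilon}(b)-1$ if $1<p_{1-\varepsilon}(b)<p_{1-\varepsilon}(a)$, unchanged otherwise.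 The labeled extended Rauzy class of $\mathbf{p}$ is the set of pairs reachable from $\mathbf{p}$ by Rauzy and left Rauzy moves of both types; the non-labeled extended Rauzy class is its image under $(p_0,p_1)\mapsto p_1\circ p_0^{-1}\in\mathfrak{S}_n$. Standard: $p_0^{-1}(1)=p_1^{-1}(n)$ and $p_1^{-1}(1)=p_0^{-1}(n)$. A standard pair is piece-wise order reversing if there are $2=k_0<\dots<k_\ell=n$ with $B_i=p_0^{-1}\{k_{i-1},\dots,k_i-1\}=p_1^{-1}\{k_{i-1},\dots,k_i-1\}$ and $p_0(b)+p_1(b)=k_{i-1}+k_i-1$ for $b\in B_i$; the $B_i$ are blocks ($k$-block: $k$ letters). Chains: with the $1$-blocks $S_1,\dots,S_{k-1}$ listed left to right, chain $C_i$ is the possibly empty sequence of consecutive blocks strictly between $S_{i-1}$ and $S_i$ ($C_1$ before $S_1$, $C_k$ after $S_{k-1}$). Types (defined only for piece-wise order reversing pairs, and requiring more than one block of size $\ge2$): Type $\langle2\rangle$: all nonempty chains consist of $2$-blocks; Type $\langle4\rangle$: exactly one chain consists of a $4$-block followed by $m\ge0$ consecutive $2$-blocks and all other nonempty chains consist of $2$-blocks; Type $\langle5\rangle$: exactly one chain consists of a single $5$-block and every other nonempty chain consists of exactly one $2$-block. *)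

theory Defs
  imports Main "HOL-Library.Cardinality"
begin

text \<open>The alphabet is a finite type 'a; n = CARD('a).
  A pair is (p0, p1) with p0, p1 :: 'a => nat bijections onto {1..n}.\<close>

type_synonym 'a pair = "('a \<Rightarrow> nat) \<times> ('a \<Rightarrow> nat)"

definition is_pair :: "('a::finite) pair \<Rightarrow> bool" where
  "is_pair p \<longleftrightarrow> bij_betw (fst p) UNIV {1..CARD('a)} \<and> bij_betw (snd p) UNIV {1..CARD('a)}"

definition irreducible :: "('a::finite) pair \<Rightarrow> bool" where
  "irreducible p \<longleftrightarrow> (\<forall>k. 1 \<le> k \<and> k < CARD('a) \<longrightarrow>
      fst p -` {1..k} \<noteq> snd p -` {1..k})"

text \<open>Right Rauzy move: pe is the row of type eps (kept), po the other row.\<close>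
definition rauzy_row :: "('a::finite \<Rightarrow> nat) \<Rightarrow> ('a \<Rightarrow> nat) \<Rightarrow> ('a \<Rightarrow> nat)" where
  "rauzy_row pe po = (\<lambda>b. let z = inv pe CARD('a) in
      if po b \<le> po z then po b
      else if po b < CARD('a) then po b + 1
      else po z + 1)"

definition left_rauzy_row :: "('a::finite \<Rightarrow> nat) \<Rightarrow> ('a \<Rightarrow> nat) \<Rightarrow> ('a \<Rightarrow> nat)" where
  "left_rauzy_row pe po = (\<lambda>b. let a = inv pe 1 in
      if po b = 1 then po a - 1
      else if 1 < po b \<and> po b < po a then po b - 1
      else po b)"

text \<open>Type eps = 0 is encoded by False, type eps = 1 by True.\<close>
definition rauzy :: "bool \<Rightarrow> ('a::finite) pair \<Rightarrow> 'a pair" where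
  "rauzy e p = (if e then (rauzy_row (snd p) (fst p), snd p)
                else (fst p, rauzy_row (fst p) (snd p)))"

definition left_rauzy :: "bool \<Rightarrow> ('a::finite) pair \<Rightarrow> 'a pair" where
  "left_rauzy e p = (if e then (left_rauzy_row (snd p) (fst p), snd p)
                     else (fst p, left_rauzy_row (fst p) (snd p)))"

definition rauzy_step :: "('a::finite) pair \<Rightarrow> 'a pair \<Rightarrow> bool" where
  "rauzy_step p q \<longleftrightarrow> (\<exists>e. q = rauzy e p \<or> q = left_rauzy e p)"

definition labeled_ext_rauzy_class :: "('a::finite) pair \<Rightarrow> 'a pair set" where
  "labeled_ext_rauzy_class p = {q. rauzy_step\<^sup>*\<^sup>* p q}"

definition pair_perm :: "('a::finite) pair \<Rightarrow> nat \<Rightarrow> nat" where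
  "pair_perm p = (\<lambda>k. if 1 \<le> k \<and> k \<le> CARD('a) then snd p (inv (fst p) k) else k)"

definition nonlabeled_ext_rauzy_class :: "('a::finite) pair \<Rightarrow> (nat \<Rightarrow> nat) set" where
  "nonlabeled_ext_rauzy_class p = pair_perm ` labeled_ext_rauzy_class p"

definition standard :: "('a::finite) pair \<Rightarrow> bool" where
  "standard p \<longleftrightarrow> inv (fst p) 1 = inv (snd p) CARD('a) \<and> inv (snd p) 1 = inv (fst p) CARD('a)"

definition por_with :: "('a::finite) pair \<Rightarrow> nat \<Rightarrow> (nat \<Rightarrow> nat) \<Rightarrow> bool" where
  "por_with p l k \<longleftrightarrow> standard p \<and> k 0 = 2 \<and> k l = CARD('a) \<and>
     (\<forall>i<l. k i < k (Suc i)) \<and>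
     (\<forall>i\<in>{1..l}. fst p -` {k (i-1)..<k i} = snd p -` {k (i-1)..<k i} \<and>
        (\<forall>b\<in>fst p -` {k (i-1)..<k i}. fst p b + snd p b = k (i-1) + k i - 1))"

definition piecewise_order_reversing :: "('a::finite) pair \<Rightarrow> bool" where
  "piecewise_order_reversing p \<longleftrightarrow> (\<exists>l k. por_with p l k)"

definition block_sizes :: "nat \<Rightarrow> (nat \<Rightarrow> nat) \<Rightarrow> nat list" where
  "block_sizes l k = map (\<lambda>i. k (Suc i) - k i) [0..<l]"

text \<open>Chains: the maximal (possibly empty) runs of blocks between consecutive 1-blocks,
  including the run before the first and after the last 1-block.\<close>
fun chains :: "nat list \<Rightarrow> nat list list" where
  "chains [] = [[]]"
| "chains (x # xs) = (if x = 1 then [] # chains xs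
                       else (x # hd (chains xs)) # tl (chains xs))"

definition many_big_blocks :: "nat list \<Rightarrow> bool" where
  "many_big_blocks ss \<longleftrightarrow> length (filter (\<lambda>s. 2 \<le> s) ss) > 1"

definition type2_sizes :: "nat list \<Rightarrow> bool" where
  "type2_sizes ss \<longleftrightarrow> many_big_blocks ss \<and>
     (\<forall>c\<in>set (chains ss). c \<noteq> [] \<longrightarrow> (\<forall>x\<in>set c. x = 2))"

definition type4_sizes :: "nat list \<Rightarrow> bool" where
  "type4_sizes ss \<longleftrightarrow> many_big_blocks ss \<and>
     (let cs = chains ss in \<exists>j<length cs.
        (\<exists>m. cs ! j = 4 # replicate m 2) \<and>
        (\<forall>i<length cs. i \<noteq> j \<longrightarrow> cs ! i \<noteq> [] \<longrightarrow> (\<forall>x\<in>set (cs ! i). x = 2)))"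

definition type5_sizes :: "nat list \<Rightarrow> bool" where
  "type5_sizes ss \<longleftrightarrow> many_big_blocks ss \<and>
     (let cs = chains ss in \<exists>j<length cs.
        cs ! j = [5] \<and>
        (\<forall>i<length cs. i \<noteq> j \<longrightarrow> cs ! i \<noteq> [] \<longrightarrow> cs ! i = [2]))"

definition type2 :: "('a::finite) pair \<Rightarrow> bool" where
  "type2 p \<longleftrightarrow> (\<exists>l k. por_with p l k \<and> type2_sizes (block_sizes l k))"

definition type4 :: "('a::finite) pair \<Rightarrow> bool" where
  "type4 p \<longleftrightarrow> (\<exists>l k. por_with p l k \<and> type4_sizes (block_sizes l k))"

definition type5 :: "('a::finite) pair \<Rightarrow> bool" where
  "type5 p \<longleftrightarrow> (\<exists>l k. por_with p l k \<and> type5_sizes (block_sizes l k))"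

end

theory Submission
  imports Defs
begin



definition cr :: "('a::finite) pair \<Rightarrow> 'a set \<Rightarrow> nat" where
  "cr p A = card {(a,b). a\<in>A \<and> b\<in>A \<and> fst p a < fst p b \<and> snd p b < snd p a}"

definition X :: "('a::finite) pair \<Rightarrow> 'a \<Rightarrow> 'a \<Rightarrow> bool" where
  "X p a b \<longleftrightarrow> (fst p a < fst p b \<and> snd p b < snd p a) \<or> (fst p b < fst p a \<and> snd p a < snd p b)"

lemma X_sym: "X p a b = X p b a" unfolding X_def by auto

lemma cr_insert:
  fixes p :: "('a::finite) pair"
  assumes "x \<notin> A"
  shows "cr p (insert x A) = cr p A + card {c\<in>A. X p x c}"
proof -
  let ?S = "{(a,b). a\<in>A \<and> b\<in>A \<and> fst p a < fst p b \<and> snd p b < snd p a}"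
  let ?C1 = "{c\<in>A. fst p x < fst p c \<and> snd p c < snd p x}"
  let ?C2 = "{c\<in>A. fst p c < fst p x \<and> snd p x < snd p c}"
  have eq: "{(a,b). a\<in>insert x A \<and> b\<in>insert x A \<and> fst p a < fst p b \<and> snd p b < snd p a}
     = ?S \<union> ((\<lambda>c. (x,c)) ` ?C1 \<union> (\<lambda>c. (c,x)) ` ?C2)"
    by auto
  have d1: "?S \<inter> ((\<lambda>c. (x,c)) ` ?C1 \<union> (\<lambda>c. (c,x)) ` ?C2) = {}" using assms by auto
  have d2: "(\<lambda>c. (x,c)) ` ?C1 \<inter> (\<lambda>c. (c,x)) ` ?C2 = {}" by auto
  have c1: "card ((\<lambda>c. (x,c)) ` ?C1) = card ?C1" by (rule card_image) (auto simp: inj_on_def)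
  have c2: "card ((\<lambda>c. (c,x)) ` ?C2) = card ?C2" by (rule card_image) (auto simp: inj_on_def)
  have "{c\<in>A. X p x c} = ?C1 \<union> ?C2" unfolding X_def by auto
  moreover have "?C1 \<inter> ?C2 = {}" by auto
  ultimately have c3: "card {c\<in>A. X p x c} = card ?C1 + card ?C2"
    by (simp add: card_Un_disjoint)
  show ?thesis unfolding cr_def eq
    by (subst card_Un_disjoint, simp, simp, rule d1, subst card_Un_disjoint, simp, simp, rule d2)
       (simp add: c1 c2 c3)
qed

lemma cr_empty[simp]: "cr p {} = 0" unfolding cr_def by simp

definition Z :: "('a::finite) pair \<Rightarrow> 'a set \<Rightarrow> nat \<Rightarrow> int" where
  "Z p U t = (\<Sum>A\<in>Pow U. (-1)^(cr p A + t * card A))"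

lemma sum_Pow_insert:
  fixes U :: "('a::finite) set"
  assumes "x \<notin> U"
  shows "(\<Sum>A\<in>Pow (insert x U). f A) = (\<Sum>A\<in>Pow U. f A) + (\<Sum>A\<in>Pow U. f (insert x A))"
proof -
  have i: "inj_on (insert x) (Pow U)" using assms unfolding inj_on_def
    by (metis Pow_iff insert_ident subset_iff)
  have d: "Pow U \<inter> insert x ` Pow U = {}" using assms by auto
  show ?thesis unfolding Pow_insert
    by (subst sum.union_disjoint) (auto simp: d sum.reindex[OF i])
qed

lemma Z_universal:
  fixes p :: "('a::finite) pair"
  assumes "x \<notin> U" "\<forall>c\<in>U. X p x c"
  shows "Z p (insert x U) t = Z p U t + (-1)^t * Z p U (Suc t)"
proof -
  have "\<And>A. A \<in> Pow U \<Longrightarrow> (-1::int)^(cr p (insert x A) + t * card (insert x A))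
         = (-1)^t * (-1)^(cr p A + Suc t * card A)"
  proof -
    fix A assume A: "A \<in> Pow U"
    then have xA: "x \<notin> A" using assms by auto
    have "{c\<in>A. X p x c} = A" using A assms by auto
    then have "cr p (insert x A) = cr p A + card A" using cr_insert[OF xA] by simp
    moreover have "card (insert x A) = Suc (card A)" using xA by simp
    ultimately have "cr p (insert x A) + t * card (insert x A) = t + (cr p A + Suc t * card A)"
      by simp
    then show "(-1::int)^(cr p (insert x A) + t * card (insert x A))
         = (-1)^t * (-1)^(cr p A + Suc t * card A)" by (simp add: power_add)
  qed
  then show ?thesis unfolding Z_def
    by (simp add: sum_Pow_insert[OF assms(1)] sum_distrib_left)
qed

lemma Z_mod2: "Z p U (Suc (Suc t)) = Z p U t"
proof -
  have "\<And>A. (-1::int)^(cr p A + Suc (Suc t) * card A) = (-1)^(cr p A + t * card A)"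
  proof -
    fix A
    have "cr p A + Suc (Suc t) * card A = (cr p A + t * card A) + 2 * card A" by simp
    then show "(-1::int)^(cr p A + Suc (Suc t) * card A) = (-1)^(cr p A + t * card A)"
      by (simp add: power_add power_mult)
  qed
  then show ?thesis unfolding Z_def by simp
qed

lemma cr_union:
  fixes p :: "('a::finite) pair"
  assumes "A \<inter> C = {}" "\<forall>a\<in>A. \<forall>c\<in>C. \<not> X p a c"
  shows "cr p (A \<union> C) = cr p A + cr p C"
  using finite[of C] assms
proof (induction C rule: finite_induct)
  case empty then show ?case by simp
next
  case (insert x F)
  have xn: "x \<notin> A \<union> F" using insert by auto
  have "{c \<in> A \<union> F. X p x c} = {c\<in>F. X p x c}" using insert.prems X_sym[of p x] by blast
  then have "cr p (A \<union> insert x F) = cr p (A \<union> F) + card {c\<in>F. X p x c}"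
    using cr_insert[OF xn] by simp
  also have "\<dots> = cr p A + cr p F + card {c\<in>F. X p x c}" using insert by auto
  also have "\<dots> = cr p A + cr p (insert x F)" using cr_insert[OF insert(2)] by simp
  finally show ?case .
qed

lemma Z_split:
  fixes p :: "('a::finite) pair"
  assumes "U1 \<inter> U2 = {}" "\<forall>a\<in>U1. \<forall>c\<in>U2. \<not> X p a c"
  shows "Z p (U1 \<union> U2) t = Z p U1 t * Z p U2 t"
proof -
  have im: "Pow (U1 \<union> U2) = (\<lambda>(A,C). A \<union> C) ` (Pow U1 \<times> Pow U2)"
  proof
    show "Pow (U1 \<union> U2) \<subseteq> (\<lambda>(A,C). A \<union> C) ` (Pow U1 \<times> Pow U2)"
    proof
      fix B assume "B \<in> Pow (U1 \<union> U2)"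
      then have "B = (\<lambda>(A,C). A \<union> C) (B \<inter> U1, B \<inter> U2)" by auto
      moreover have "(B \<inter> U1, B \<inter> U2) \<in> Pow U1 \<times> Pow U2" by auto
      ultimately show "B \<in> (\<lambda>(A,C). A \<union> C) ` (Pow U1 \<times> Pow U2)" by blast
    qed
  qed auto
  have inj: "inj_on (\<lambda>(A,C). A \<union> C) (Pow U1 \<times> Pow U2)"
  proof (rule inj_onI, clarsimp)
    fix A C A' C' assume h: "A \<subseteq> U1" "C \<subseteq> U2" "A' \<subseteq> U1" "C' \<subseteq> U2" "A \<union> C = A' \<union> C'"
    have "A = (A \<union> C) \<inter> U1" "A' = (A' \<union> C') \<inter> U1" "C = (A \<union> C) \<inter> U2" "C' = (A' \<union> C') \<inter> U2"
      using h assms(1) by auto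
    then show "A = A' \<and> C = C'" using h(5) by metis
  qed
  have tm: "\<And>A C. A \<in> Pow U1 \<Longrightarrow> C \<in> Pow U2 \<Longrightarrow>
     (-1::int)^(cr p (A \<union> C) + t * card (A \<union> C)) = (-1)^(cr p A + t * card A) * (-1)^(cr p C + t * card C)"
  proof -
    fix A C assume h: "A \<in> Pow U1" "C \<in> Pow U2"
    have d: "A \<inter> C = {}" using h assms(1) by auto
    have "cr p (A \<union> C) = cr p A + cr p C" using h assms by (intro cr_union d) blast+
    moreover have "card (A \<union> C) = card A + card C" using d by (simp add: card_Un_disjoint)
    ultimately have "cr p (A \<union> C) + t * card (A \<union> C) = (cr p A + t * card A) + (cr p C + t * card C)"
      by (simp add: algebra_simps)
    then show "(-1::int)^(cr p (A \<union> C) + t * card (A \<union> C)) = (-1)^(cr p A + t * card A) * (-1)^(cr p C + t * card C)"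
      by (simp add: power_add)
  qed
  have "Z p (U1 \<union> U2) t = (\<Sum>(A,C)\<in>Pow U1 \<times> Pow U2. (-1::int)^(cr p (A \<union> C) + t * card (A \<union> C)))"
    unfolding Z_def im by (subst sum.reindex[OF inj]) (simp add: case_prod_beta)
  also have "\<dots> = (\<Sum>(A,C)\<in>Pow U1 \<times> Pow U2. (-1::int)^(cr p A + t * card A) * (-1)^(cr p C + t * card C))"
    by (rule sum.cong) (auto simp: tm)
  also have "\<dots> = Z p U1 t * Z p U2 t" unfolding Z_def by (simp add: sum_product sum.cartesian_product)
  finally show ?thesis .
qed

fun hh :: "nat \<Rightarrow> nat \<Rightarrow> int" where
  "hh 0 t = 1"
| "hh (Suc s) t = hh s t + (-1)^t * hh s (Suc t)"

lemma Z_clique: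
  fixes p :: "('a::finite) pair"
  assumes "\<forall>a\<in>U. \<forall>b\<in>U. a \<noteq> b \<longrightarrow> X p a b"
  shows "Z p U t = hh (card U) t"
  using finite[of U] assms
proof (induction U arbitrary: t rule: finite_induct)
  case empty then show ?case by (simp add: Z_def)
next
  case (insert x F)
  have "Z p (insert x F) t = Z p F t + (-1)^t * Z p F (Suc t)"
    using insert by (intro Z_universal) auto
  also have "\<dots> = hh (card F) t + (-1)^t * hh (card F) (Suc t)" using insert by simp
  finally show ?case using insert by simp
qed

lemma hh_vals: "hh 1 0 = 2" "hh 2 0 = 2" "hh 4 0 = -4" "hh 5 0 = -8"
  by (simp_all add: numeral_eq_Suc)




lemma card_xor:
  fixes A :: "('a::finite) set"
  shows "card {c\<in>A. P c \<noteq> Q c} + 2 * card {c\<in>A. P c \<and> Q c} = card {c\<in>A. P c} + card {c\<in>A. Q c}"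
proof -
  have a: "{c\<in>A. P c} = {c\<in>A. P c \<and> \<not> Q c} \<union> {c\<in>A. P c \<and> Q c}" by auto
  have b: "{c\<in>A. Q c} = {c\<in>A. Q c \<and> \<not> P c} \<union> {c\<in>A. P c \<and> Q c}" by auto
  have c: "{c\<in>A. P c \<noteq> Q c} = {c\<in>A. P c \<and> \<not> Q c} \<union> {c\<in>A. Q c \<and> \<not> P c}" by auto
  show ?thesis unfolding a b c
    by (subst card_Un_disjoint, simp, simp, blast)+ simp
qed

lemma even_shift: "(a::nat) + 2*e = b + 2*f \<Longrightarrow> even a = even b" by presburger

lemma neg1_eq: "even (m::nat) = even n \<Longrightarrow> (-1::int)^m = (-1)^n"
  by (simp add: minus_one_power_iff)

lemma cr_agree:
  fixes p p' :: "('a::finite) pair"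
  assumes H1: "\<forall>a b. a\<noteq>y \<longrightarrow> b\<noteq>y \<longrightarrow> X p' a b = X p a b" and "y \<notin> A"
  shows "cr p' A = cr p A"
  using finite[of A] assms(2)
proof (induction A rule: finite_induct)
  case empty then show ?case by simp
next
  case (insert x F)
  have "{c\<in>F. X p' x c} = {c\<in>F. X p x c}" using insert H1 by auto
  then show ?case using insert cr_insert[OF insert(2), of p] cr_insert[OF insert(2), of p'] by simp
qed

lemma inv_generic:
  fixes p p' :: "('a::finite) pair"
  assumes yz: "y \<noteq> z"
    and H1: "\<forall>a b. a\<noteq>y \<longrightarrow> b\<noteq>y \<longrightarrow> X p' a b = X p a b"
    and H2: "\<forall>c. c\<noteq>y \<longrightarrow> c\<noteq>z \<longrightarrow> X p' y c = (X p y c \<noteq> X p z c)"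
    and H3: "X p z y" "X p' z y"
  shows "Z p' UNIV 1 = Z p UNIV 1"
proof -
  define \<Phi> where "\<Phi> A = (if y\<in>A then (if z\<in>A then A - {z} else insert z A) else A)" for A :: "'a set"
  have invol: "\<Phi> (\<Phi> A) = A" for A using yz unfolding \<Phi>_def by auto
  have bij: "bij_betw \<Phi> (Pow UNIV) (Pow UNIV)"
    by (rule bij_betw_byWitness[where f'=\<Phi>]) (auto simp: invol)
  have key: "even (cr p' (\<Phi> A) + card (\<Phi> A)) = even (cr p A + card A)" for A
  proof (cases "y \<in> A")
    case False
    then show ?thesis unfolding \<Phi>_def using cr_agree[OF H1 False] by simp
  next
    case yA: True
    show ?thesis
    proof (cases "z \<in> A")
      case False
      define A0 where "A0 = A - {y}"
      have A: "A = insert y A0" and yA0: "y \<notin> A0" and zA0: "z \<notin> A0" using yA False unfolding A0_def by auto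
      have zA: "z \<notin> A" using False .
      have e1: "cr p A = cr p A0 + card {c\<in>A0. X p y c}" unfolding A using cr_insert[OF yA0] by simp
      have e2: "cr p' (insert z A) = cr p' A + card {c\<in>A. X p' z c}" using cr_insert[OF zA] by simp
      have "{c\<in>A0. X p' y c} = {c\<in>A0. X p y c \<noteq> X p z c}" using H2 yA0 zA0 by auto
      then have e3: "cr p' A = cr p A0 + card {c\<in>A0. X p y c \<noteq> X p z c}"
        unfolding A using cr_insert[OF yA0, of p'] cr_agree[OF H1 yA0] by simp
      have "{c\<in>A. X p' z c} = insert y {c\<in>A0. X p z c}"
        unfolding A using H1 H3 yz yA0 X_sym[of p' z y] by auto
      then have e4: "card {c\<in>A. X p' z c} = Suc (card {c\<in>A0. X p z c})" using yA0 by simp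
      have e5: "card (insert z A) = Suc (card A)" using zA by simp
      have cx: "card {c\<in>A0. X p y c \<noteq> X p z c} + 2 * card {c\<in>A0. X p y c \<and> X p z c}
         = card {c\<in>A0. X p y c} + card {c\<in>A0. X p z c}" by (rule card_xor)
      have "\<Phi> A = insert z A" unfolding \<Phi>_def using yA zA by simp
      then show ?thesis using e1 e2 e3 e4 e5 cx
        by (intro even_shift[where e="card {c\<in>A0. X p y c \<and> X p z c}" and f="Suc (card {c\<in>A0. X p z c})"]) simp
    next
      case zA: True
      define A1 where "A1 = A - {y, z}"
      have y1: "y \<notin> A1" and z1: "z \<notin> A1" unfolding A1_def by auto
      have A: "A = insert z (insert y A1)" using yA zA unfolding A1_def by auto
      have B: "\<Phi> A = insert y A1" unfolding \<Phi>_def using yA zA yz A1_def by auto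
      have zyA1: "z \<notin> insert y A1" using yz z1 by simp
      have e1: "cr p' (insert y A1) = cr p' A1 + card {c\<in>A1. X p' y c}" using cr_insert[OF y1] by simp
      have "{c\<in>A1. X p' y c} = {c\<in>A1. X p y c \<noteq> X p z c}" using H2 y1 z1 by auto
      then have e2: "cr p' (insert y A1) = cr p A1 + card {c\<in>A1. X p y c \<noteq> X p z c}"
        using e1 cr_agree[OF H1 y1] by simp
      have e3: "cr p A = cr p (insert y A1) + card {c\<in>insert y A1. X p z c}"
        unfolding A using cr_insert[OF zyA1] by simp
      have e4: "cr p (insert y A1) = cr p A1 + card {c\<in>A1. X p y c}" using cr_insert[OF y1] by simp
      have "{c\<in>insert y A1. X p z c} = insert y {c\<in>A1. X p z c}" using H3 by auto
      then have e5: "card {c\<in>insert y A1. X p z c} = Suc (card {c\<in>A1. X p z c})" using y1 by simp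
      have e6: "card A = Suc (Suc (card A1))" unfolding A using y1 z1 yz by simp
      have e7: "card (insert y A1) = Suc (card A1)" using y1 by simp
      have cx: "card {c\<in>A1. X p y c \<noteq> X p z c} + 2 * card {c\<in>A1. X p y c \<and> X p z c}
         = card {c\<in>A1. X p y c} + card {c\<in>A1. X p z c}" by (rule card_xor)
      show ?thesis unfolding B using e2 e3 e4 e5 e6 e7 cx
        by (intro even_shift[where e="Suc (card {c\<in>A1. X p y c \<and> X p z c})" and f="0"]) simp
    qed
  qed
  have "Z p' UNIV 1 = (\<Sum>A\<in>Pow UNIV. (-1::int)^(cr p' (\<Phi> A) + card (\<Phi> A)))"
    unfolding Z_def by (subst sum.reindex_bij_betw[OF bij, symmetric]) simp
  also have "\<dots> = Z p UNIV 1" unfolding Z_def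
    by (rule sum.cong) (simp, simp only: mult_1, rule neg1_eq, rule key)
  finally show ?thesis .
qed




lemma bijF:
  fixes h :: "'a::finite \<Rightarrow> nat"
  assumes "bij_betw h UNIV {1..CARD('a)}"
  shows "inj h" "1 \<le> h a" "h a \<le> CARD('a)" "1 \<le> k \<Longrightarrow> k \<le> CARD('a) \<Longrightarrow> h (inv h k) = k"
    "inv h (h a) = a"
proof -
  show i: "inj h" using assms by (rule bij_betw_imp_inj_on)
  have r: "range h = {1..CARD('a)}" using assms by (rule bij_betw_imp_surj_on)
  have "h a \<in> range h" by (rule rangeI)
  then have "h a \<in> {1..CARD('a)}" unfolding r .
  then show "1 \<le> h a" "h a \<le> CARD('a)" by simp_all
  show "1 \<le> k \<Longrightarrow> k \<le> CARD('a) \<Longrightarrow> h (inv h k) = k"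
  proof -
    assume "1 \<le> k" "k \<le> CARD('a)"
    then have "k \<in> range h" unfolding r by simp
    then show ?thesis by (rule f_inv_into_f)
  qed
  show "inv h (h a) = a" using i by (rule inv_f_f)
qed
lemma bijI':
  fixes h :: "'a::finite \<Rightarrow> nat"
  assumes "inj h" "\<And>b. 1 \<le> h b \<and> h b \<le> CARD('a)"
  shows "bij_betw h UNIV {1..CARD('a)}"
proof -
  have s: "range h \<subseteq> {1..CARD('a)}" using assms(2) by auto
  have "card (range h) = CARD('a)" using assms(1) by (rule card_image)
  also have "\<dots> = card {1..CARD('a)}" by simp
  finally have "range h = {1..CARD('a)}" using s by (intro card_subset_eq) auto
  then show ?thesis using assms(1) by (simp add: bij_betw_def)
qed
lemma X_char:
  fixes p :: "('a::finite) pair"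
  assumes "inj (fst p)" "inj (snd p)" "a \<noteq> b"
  shows "X p a b = ((fst p a < fst p b) \<noteq> (snd p a < snd p b))"
proof -
  have "fst p a \<noteq> fst p b" "snd p a \<noteq> snd p b" using assms by (auto dest: injD)
  then show ?thesis unfolding X_def by auto
qed
definition Inv :: "('a::finite) pair \<Rightarrow> bool" where
  "Inv p \<longleftrightarrow> is_pair p \<and> inv (fst p) 1 \<noteq> inv (snd p) 1 \<and> inv (fst p) CARD('a) \<noteq> inv (snd p) CARD('a)"

lemma right_move:
  fixes p :: "('a::finite) pair"
  assumes I: "Inv p"
  shows "Inv (rauzy False p) \<and> Z (rauzy False p) UNIV 1 = Z p UNIV 1"
proof -
  obtain f g where p: "p = (f, g)" by (cases p)
  let ?n = "CARD('a)"
  define z where "z = inv f ?n"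
  define y where "y = inv g ?n"
  define g' where "g' = rauzy_row f g"
  have bf: "bij_betw f UNIV {1..?n}" and bg: "bij_betw g UNIV {1..?n}"
    using I unfolding Inv_def is_pair_def p by auto
  have n1: "1 \<le> ?n" by (simp add: Suc_leI)
  have yz: "y \<noteq> z" using I unfolding Inv_def p y_def z_def by auto
  have fz: "f z = ?n" unfolding z_def using bijF(4)[OF bf] n1 by simp
  have gy: "g y = ?n" unfolding y_def using bijF(4)[OF bg] n1 by simp
  have ginj: "inj g" using bijF(1)[OF bg] .
  have finj: "inj f" using bijF(1)[OF bf] .
  have "g z \<noteq> g y" using yz ginj by (auto dest: injD)
  then have gz: "g z < ?n" using bijF(3)[OF bg, of z] gy by simp
  have g'_def2: "g' b = (if g b \<le> g z then g b else if g b < ?n then g b + 1 else g z + 1)" for b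
    unfolding g'_def rauzy_row_def z_def by simp
  have g'y: "g' y = g z + 1" using g'_def2[of y] gy gz by simp
  have gb: "b \<noteq> y \<Longrightarrow> g b < ?n" for b
  proof -
    assume "b \<noteq> y" then have "g b \<noteq> g y" using ginj by (auto dest: injD)
    then show ?thesis using bijF(3)[OF bg, of b] gy by simp
  qed
  have g'b: "b \<noteq> y \<Longrightarrow> g' b = (if g b \<le> g z then g b else g b + 1)" for b
    using g'_def2[of b] gb[of b] by simp
  have mono: "a \<noteq> y \<Longrightarrow> b \<noteq> y \<Longrightarrow> (g' a < g' b) = (g a < g b)" for a b
    using g'b[of a] g'b[of b] by auto
  have g'inj: "inj g'"
  proof (rule injI)
    fix a b assume e: "g' a = g' b"
    show "a = b"
    proof (cases "a = y"; cases "b = y")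
      assume "a \<noteq> y" "b \<noteq> y"
      then have "g a = g b" using mono[of a b] mono[of b a] e by (metis not_less_iff_gr_or_eq)
      then show ?thesis using ginj by (simp add: injD)
    next
      assume "a = y" "b \<noteq> y"
      then have "g z + 1 = g' b" using e g'y by simp
      then have "g b = g z" using g'b[OF \<open>b \<noteq> y\<close>] by (auto split: if_splits)
      then have "b = z" using ginj by (simp add: injD)
      then show ?thesis using \<open>g z + 1 = g' b\<close> g'b[OF \<open>b \<noteq> y\<close>] by simp
    next
      assume "a \<noteq> y" "b = y"
      then have "g z + 1 = g' a" using e g'y by simp
      then have "g a = g z" using g'b[OF \<open>a \<noteq> y\<close>] by (auto split: if_splits)
      then have "a = z" using ginj by (simp add: injD)
      then show ?thesis using \<open>g z + 1 = g' a\<close> g'b[OF \<open>a \<noteq> y\<close>] by simp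
    qed simp
  qed
  have g'r: "1 \<le> g' b \<and> g' b \<le> ?n" for b
    using g'_def2[of b] bijF(2,3)[OF bg, of b] gz by auto
  have bg': "bij_betw g' UNIV {1..?n}" by (rule bijI'[OF g'inj g'r])
  have rp: "rauzy False p = (f, g')" unfolding rauzy_def p g'_def by simp
  have pair': "is_pair (f, g')" unfolding is_pair_def using bf bg' by simp
  define w where "w = inv g 1"
  have gw: "g w = 1" unfolding w_def using bijF(4)[OF bg] n1 by simp
  have g'w: "g' w = 1" using g'_def2[of w] gw bijF(2)[OF bg, of z] by simp
  have iw: "inv g' 1 = w" using g'w g'inj by (metis inv_f_f)
  have first: "inv f 1 \<noteq> inv g' 1" using I unfolding Inv_def p iw w_def by simp
  have g'z: "g' z = g z" using g'_def2[of z] by simp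
  have last: "inv f ?n \<noteq> inv g' ?n"
  proof
    assume "inv f ?n = inv g' ?n"
    then have "g' z = ?n" unfolding z_def using bijF(4)[OF bg'] n1 by simp
    then show False using g'z gz by simp
  qed
  have Inv': "Inv (rauzy False p)" unfolding rp Inv_def using pair' first last by simp
  have H1: "\<forall>a b. a\<noteq>y \<longrightarrow> b\<noteq>y \<longrightarrow> X (f,g') a b = X (f,g) a b"
  proof (intro allI impI)
    fix a b assume "a \<noteq> y" "b \<noteq> y"
    then show "X (f,g') a b = X (f,g) a b"
      unfolding X_def using mono[of a b] mono[of b a] by auto
  qed
  have H2: "\<forall>c. c\<noteq>y \<longrightarrow> c\<noteq>z \<longrightarrow> X (f,g') y c = (X (f,g) y c \<noteq> X (f,g) z c)"
  proof (intro allI impI)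
    fix c assume cy: "c \<noteq> y" and cz: "c \<noteq> z"
    have "f c \<noteq> f z" using cz finj by (auto dest: injD)
    then have fc: "f c < ?n" using bijF(3)[OF bf, of c] fz by simp
    have gcz: "g c \<noteq> g z" using cz ginj by (auto dest: injD)
    have a1: "X (f,g') y c = ((f y < f c) \<noteq> (g' y < g' c))"
      using X_char[of "(f,g')" y c] finj g'inj cy by simp
    have a2: "X (f,g) y c = ((f y < f c) \<noteq> (g y < g c))"
      using X_char[of "(f,g)" y c] finj ginj cy by simp
    have a3: "X (f,g) z c = ((f z < f c) \<noteq> (g z < g c))"
      using X_char[of "(f,g)" z c] finj ginj cz by simp
    have "(g' y < g' c) = (g z < g c)" using g'y g'b[OF cy] gcz by auto
    then show "X (f,g') y c = (X (f,g) y c \<noteq> X (f,g) z c)"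
      using a1 a2 a3 gy gb[OF cy] fz fc by auto
  qed
  have "f y \<noteq> f z" using yz finj by (auto dest: injD)
  then have fy: "f y < ?n" using bijF(3)[OF bf, of y] fz by simp
  have H3: "X (f,g) z y" "X (f,g') z y"
    unfolding X_def using fy fz gy gz g'y g'z by simp_all
  have "Z (f,g') UNIV 1 = Z (f,g) UNIV 1" by (rule inv_generic[OF yz H1 H2 H3])
  then show ?thesis using Inv' rp p by simp
qed

lemma left_move:
  fixes p :: "('a::finite) pair"
  assumes I: "Inv p"
  shows "Inv (left_rauzy False p) \<and> Z (left_rauzy False p) UNIV 1 = Z p UNIV 1"
proof -
  obtain f g where p: "p = (f, g)" by (cases p)
  let ?n = "CARD('a)"
  define z where "z = inv f 1"
  define y where "y = inv g 1"
  define g' where "g' = left_rauzy_row f g"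
  have bf: "bij_betw f UNIV {1..?n}" and bg: "bij_betw g UNIV {1..?n}"
    using I unfolding Inv_def is_pair_def p by auto
  have n1: "1 \<le> ?n" by (simp add: Suc_leI)
  have yz: "y \<noteq> z" using I unfolding Inv_def p y_def z_def by auto
  have fz: "f z = 1" unfolding z_def using bijF(4)[OF bf] n1 by simp
  have gy: "g y = 1" unfolding y_def using bijF(4)[OF bg] n1 by simp
  have ginj: "inj g" using bijF(1)[OF bg] .
  have finj: "inj f" using bijF(1)[OF bf] .
  have "g z \<noteq> g y" using yz ginj by (auto dest: injD)
  then have gz: "1 < g z" using bijF(2)[OF bg, of z] gy by simp
  have g'_def2: "g' b = (if g b = 1 then g z - 1 else if 1 < g b \<and> g b < g z then g b - 1 else g b)" for b
    unfolding g'_def left_rauzy_row_def z_def by simp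
  have g'y: "g' y = g z - 1" using g'_def2[of y] gy by simp
  have gb: "b \<noteq> y \<Longrightarrow> 1 < g b" for b
  proof -
    assume "b \<noteq> y" then have "g b \<noteq> g y" using ginj by (auto dest: injD)
    then show ?thesis using bijF(2)[OF bg, of b] gy by simp
  qed
  have g'b: "b \<noteq> y \<Longrightarrow> g' b = (if g b < g z then g b - 1 else g b)" for b
    using g'_def2[of b] gb[of b] by simp
  have mono: "a \<noteq> y \<Longrightarrow> b \<noteq> y \<Longrightarrow> (g' a < g' b) = (g a < g b)" for a b
    using g'b[of a] g'b[of b] gb[of a] gb[of b] by auto
  have g'z: "g' z = g z" using g'b[of z] yz by simp
  have g'inj: "inj g'"
  proof (rule injI)
    fix a b assume e: "g' a = g' b"
    have noty: "c \<noteq> y \<Longrightarrow> g' c \<noteq> g z - 1" for c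
    proof
      assume cy: "c \<noteq> y" and h: "g' c = g z - 1"
      show False
      proof (cases "g c < g z")
        case True then show False using h g'b[OF cy] gb[OF cy] by simp
      next
        case False then show False using h g'b[OF cy] gz by simp
      qed
    qed
    show "a = b"
    proof (cases "a = y"; cases "b = y")
      assume "a \<noteq> y" "b \<noteq> y"
      then have "g a = g b" using mono[of a b] mono[of b a] e by (metis not_less_iff_gr_or_eq)
      then show ?thesis using ginj by (simp add: injD)
    next
      assume "a = y" "b \<noteq> y"
      then show ?thesis using e g'y noty[of b] by simp
    next
      assume "a \<noteq> y" "b = y"
      then show ?thesis using e g'y noty[of a] by simp
    qed simp
  qed
  have g'r: "1 \<le> g' b \<and> g' b \<le> ?n" for b
  proof (cases "b = y")
    case True then show ?thesis using g'y gz bijF(3)[OF bg, of z] by auto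
  next
    case False then show ?thesis using g'b[OF False] gb[OF False] bijF(3)[OF bg, of b] by auto
  qed
  have bg': "bij_betw g' UNIV {1..?n}" by (rule bijI'[OF g'inj g'r])
  have rp: "left_rauzy False p = (f, g')" unfolding left_rauzy_def p g'_def by simp
  have pair': "is_pair (f, g')" unfolding is_pair_def using bf bg' by simp
  have first: "inv f 1 \<noteq> inv g' 1"
  proof
    assume "inv f 1 = inv g' 1"
    then have "g' z = 1" unfolding z_def using bijF(4)[OF bg'] n1 by simp
    then show False using g'z gz by simp
  qed
  define w where "w = inv g ?n"
  have gw: "g w = ?n" unfolding w_def using bijF(4)[OF bg] n1 by simp
  have wy: "w \<noteq> y" using gw gy gz bijF(3)[OF bg, of z] by auto
  have g'w: "g' w = ?n" using g'b[OF wy] gw bijF(3)[OF bg, of z] by simp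
  have iw: "inv g' ?n = w" using g'w g'inj by (metis inv_f_f)
  have last: "inv f ?n \<noteq> inv g' ?n" using I unfolding Inv_def p iw w_def by simp
  have Inv': "Inv (left_rauzy False p)" unfolding rp Inv_def using pair' first last by simp
  have H1: "\<forall>a b. a\<noteq>y \<longrightarrow> b\<noteq>y \<longrightarrow> X (f,g') a b = X (f,g) a b"
  proof (intro allI impI)
    fix a b assume "a \<noteq> y" "b \<noteq> y"
    then show "X (f,g') a b = X (f,g) a b"
      unfolding X_def using mono[of a b] mono[of b a] by auto
  qed
  have H2: "\<forall>c. c\<noteq>y \<longrightarrow> c\<noteq>z \<longrightarrow> X (f,g') y c = (X (f,g) y c \<noteq> X (f,g) z c)"
  proof (intro allI impI)
    fix c assume cy: "c \<noteq> y" and cz: "c \<noteq> z"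
    have "f c \<noteq> f z" using cz finj by (auto dest: injD)
    then have fc: "1 < f c" using bijF(2)[OF bf, of c] fz by simp
    have gcz: "g c \<noteq> g z" using cz ginj by (auto dest: injD)
    have a1: "X (f,g') y c = ((f y < f c) \<noteq> (g' y < g' c))"
      using X_char[of "(f,g')" y c] finj g'inj cy by simp
    have a2: "X (f,g) y c = ((f y < f c) \<noteq> (g y < g c))"
      using X_char[of "(f,g)" y c] finj ginj cy by simp
    have a3: "X (f,g) z c = ((f z < f c) \<noteq> (g z < g c))"
      using X_char[of "(f,g)" z c] finj ginj cz by simp
    have "(g' y < g' c) = (g z < g c)" using g'y g'b[OF cy] gcz gb[OF cy] by auto
    then show "X (f,g') y c = (X (f,g) y c \<noteq> X (f,g) z c)"
      using a1 a2 a3 gy gb[OF cy] fz fc by auto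
  qed
  have "f y \<noteq> f z" using yz finj by (auto dest: injD)
  then have fy: "1 < f y" using bijF(2)[OF bf, of y] fz by simp
  have H3: "X (f,g) z y" "X (f,g') z y"
    unfolding X_def using fy fz gy gz g'y g'z by simp_all
  have "Z (f,g') UNIV 1 = Z (f,g) UNIV 1" by (rule inv_generic[OF yz H1 H2 H3])
  then show ?thesis using Inv' rp p by simp
qed




definition swp :: "('a::finite) pair \<Rightarrow> 'a pair" where "swp p = (snd p, fst p)"

lemma Inv_swp: "Inv (swp p) = Inv p"
  unfolding Inv_def swp_def is_pair_def by auto

lemma cr_swp: "cr (swp p) A = cr p A"
proof -
  have "{(a,b). a\<in>A \<and> b\<in>A \<and> snd p a < snd p b \<and> fst p b < fst p a}
      = prod.swap ` {(a,b). a\<in>A \<and> b\<in>A \<and> fst p a < fst p b \<and> snd p b < snd p a}" by auto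
  then show ?thesis unfolding cr_def swp_def by (simp add: card_image)
qed

lemma Z_swp: "Z (swp p) U t = Z p U t" unfolding Z_def by (simp add: cr_swp)

lemma rauzy_True: "rauzy True p = swp (rauzy False (swp p))"
  unfolding rauzy_def swp_def by simp

lemma left_rauzy_True: "left_rauzy True p = swp (left_rauzy False (swp p))"
  unfolding left_rauzy_def swp_def by simp

lemma step_inv:
  fixes p q :: "('a::finite) pair"
  assumes "Inv p" "rauzy_step p q"
  shows "Inv q \<and> Z q UNIV 1 = Z p UNIV 1"
proof -
  obtain e where e: "q = rauzy e p \<or> q = left_rauzy e p" using assms(2) unfolding rauzy_step_def by blast
  have Is: "Inv (swp p)" using assms(1) Inv_swp by metis
  show ?thesis
  proof (cases e)
    case True
    then show ?thesis using e right_move[OF Is] left_move[OF Is]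
      by (auto simp: rauzy_True left_rauzy_True Inv_swp Z_swp)
  next
    case False
    then show ?thesis using e right_move[OF assms(1)] left_move[OF assms(1)] by auto
  qed
qed

lemma reach_inv:
  fixes p q :: "('a::finite) pair"
  assumes "rauzy_step\<^sup>*\<^sup>* p q" "Inv p"
  shows "Inv q \<and> Z q UNIV 1 = Z p UNIV 1"
  using assms
proof (induction rule: rtranclp_induct)
  case base then show ?case by simp
next
  case (step q r)
  then show ?case using step_inv[of q r] by simp
qed

lemma Z_relabel:
  fixes p q :: "('a::finite) pair"
  assumes h: "bij h" and e1: "\<And>a. fst q (h a) = fst p a" and e2: "\<And>a. snd q (h a) = snd p a"
  shows "Z p UNIV t = Z q UNIV t"
proof -
  have ih: "inj h" using h bij_is_inj by auto
  have crh: "cr q (h ` A) = cr p A" for A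
  proof -
    have "{(a,b). a\<in>h`A \<and> b\<in>h`A \<and> fst q a < fst q b \<and> snd q b < snd q a}
        = map_prod h h ` {(a,b). a\<in>A \<and> b\<in>A \<and> fst p a < fst p b \<and> snd p b < snd p a}"
      using e1 e2 by auto
    moreover have "inj (map_prod h h)" using ih by (rule prod.inj_map[OF _ ih])
    ultimately show ?thesis unfolding cr_def by (simp add: card_image inj_on_subset[of _ UNIV])
  qed
  have bP: "bij_betw (image h) (Pow UNIV) (Pow UNIV)"
    using h bij_betw_Pow[of h UNIV UNIV] unfolding bij_def by blast
  have "Z q UNIV t = (\<Sum>A\<in>Pow UNIV. (-1::int)^(cr q (h ` A) + t * card (h ` A)))"
    unfolding Z_def by (subst sum.reindex_bij_betw[OF bP, symmetric]) simp
  also have "\<dots> = Z p UNIV t" unfolding Z_def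
    by (rule sum.cong) (simp_all add: crh card_image inj_on_subset[OF ih])
  finally show ?thesis by simp
qed

lemma Z_perm:
  fixes p q :: "('a::finite) pair"
  assumes "is_pair p" "is_pair q" "pair_perm p = pair_perm q"
  shows "Z p UNIV t = Z q UNIV t"
proof -
  have bp0: "bij_betw (fst p) UNIV {1..CARD('a)}" and bp1: "bij_betw (snd p) UNIV {1..CARD('a)}"
   and bq0: "bij_betw (fst q) UNIV {1..CARD('a)}" and bq1: "bij_betw (snd q) UNIV {1..CARD('a)}"
    using assms unfolding is_pair_def by auto
  define h where "h = inv (fst q) \<circ> fst p"
  have e1: "fst q (h a) = fst p a" for a
    unfolding h_def using bijF(4)[OF bq0] bijF(2,3)[OF bp0, of a] by simp
  have e2: "snd q (h a) = snd p a" for a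
  proof -
    have r: "1 \<le> fst p a \<and> fst p a \<le> CARD('a)" using bijF(2,3)[OF bp0, of a] by simp
    have "snd q (h a) = pair_perm q (fst p a)" unfolding h_def pair_perm_def using r by simp
    also have "\<dots> = pair_perm p (fst p a)" using assms(3) by simp
    also have "\<dots> = snd p a" unfolding pair_perm_def using r bijF(5)[OF bp0] by simp
    finally show ?thesis .
  qed
  have "inj h" unfolding h_def
  proof (rule comp_inj_on)
    show "inj (fst p)" using bijF(1)[OF bp0] .
    show "inj_on (inv (fst q)) (range (fst p))"
    proof (rule inj_onI)
      fix x y assume "x \<in> range (fst p)" "y \<in> range (fst p)" "inv (fst q) x = inv (fst q) y"
      then show "x = y" using bijF(2,3,4)[OF bq0] bijF(2,3)[OF bp0] by (metis rangeE)
    qed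
  qed
  then have "bij h" using finite_UNIV_inj_surj[of h] by (simp add: bij_def)
  then show ?thesis by (rule Z_relabel) (simp_all add: e1 e2)
qed




lemma k_mono:
  assumes "\<forall>i<l. (k::nat\<Rightarrow>nat) i < k (Suc i)" "i \<le> j" "j \<le> l"
  shows "k i \<le> k j"
  using assms(2,3)
proof (induction j)
  case 0 then show ?case by simp
next
  case (Suc j)
  show ?case
  proof (cases "i = Suc j")
    case False
    then have "k i \<le> k j" using Suc by simp
    moreover have "k j < k (Suc j)" using assms(1) Suc.prems by simp
    ultimately show ?thesis by simp
  qed simp
qed

lemma card_vimage_bij:
  fixes f :: "'a::finite \<Rightarrow> nat"
  assumes "bij_betw f UNIV {1..CARD('a)}" "S \<subseteq> {1..CARD('a)}"
  shows "card (f -` S) = card S"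
proof -
  have "bij_betw f (f -` S) S"
    unfolding bij_betw_def
  proof
    show "inj_on f (f -` S)" by (rule inj_on_subset[OF bijF(1)[OF assms(1)]]) simp
    show "f ` f -` S = S"
    proof
      show "f ` f -` S \<subseteq> S" by auto
      show "S \<subseteq> f ` f -` S"
      proof
        fix s assume s: "s \<in> S"
        then have "1 \<le> s" "s \<le> CARD('a)" using assms(2) by auto
        then have "f (inv f s) = s" by (rule bijF(4)[OF assms(1)])
        then show "s \<in> f ` f -` S" using s by (metis image_eqI vimageI2)
      qed
    qed
  qed
  then show ?thesis by (rule bij_betw_same_card)
qed

lemma por_Z:
  fixes p :: "('a::finite) pair"
  assumes pp: "is_pair p" and n2: "2 \<le> CARD('a)" and por: "por_with p l k"
  shows "Z p UNIV 1 = -2 * prod_list (map (\<lambda>s. hh s 0) (block_sizes l k))"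
proof -
  obtain f g where p: "p = (f, g)" by (cases p)
  let ?n = "CARD('a)"
  have bf: "bij_betw f UNIV {1..?n}" and bg: "bij_betw g UNIV {1..?n}"
    using pp unfolding is_pair_def p by auto
  have finj: "inj f" and ginj: "inj g" using bijF(1)[OF bf] bijF(1)[OF bg] by auto
  have std: "inv f 1 = inv g ?n" "inv g 1 = inv f ?n" using por unfolding por_with_def standard_def p by auto
  have k0: "k 0 = 2" and kl: "k l = ?n" and kinc: "\<forall>i<l. k i < k (Suc i)"
    using por unfolding por_with_def by auto
  have blk: "\<And>i. i < l \<Longrightarrow> f -` {k i..<k (Suc i)} = g -` {k i..<k (Suc i)} \<and>
         (\<forall>b\<in>f -` {k i..<k (Suc i)}. f b + g b = k i + k (Suc i) - 1)"
  proof -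
    fix i assume "i < l"
    then have "Suc i \<in> {1..l}" by simp
    then show "f -` {k i..<k (Suc i)} = g -` {k i..<k (Suc i)} \<and>
         (\<forall>b\<in>f -` {k i..<k (Suc i)}. f b + g b = k i + k (Suc i) - 1)"
      using por unfolding por_with_def p by (metis diff_Suc_1 fst_conv snd_conv)
  qed
  have kle: "j \<le> l \<Longrightarrow> 2 \<le> k j \<and> k j \<le> ?n" for j
    using k_mono[OF kinc, of 0 j] k_mono[OF kinc, of j l] k0 kl by simp
  define al where "al = inv f 1"
  define om where "om = inv f ?n"
  have n1: "1 \<le> ?n" using n2 by simp
  have fal: "f al = 1" unfolding al_def using bijF(4)[OF bf] n1 by simp
  have fom: "f om = ?n" unfolding om_def using bijF(4)[OF bf] n1 by simp
  have gal: "g al = ?n" unfolding al_def std using bijF(4)[OF bg] n1 by simp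
  have gom: "g om = 1" unfolding om_def std(2)[symmetric] using bijF(4)[OF bg] n1 by simp
  have alom: "al \<noteq> om" using fal fom n2 by auto
  have Xal: "c \<noteq> al \<Longrightarrow> X p al c" for c
  proof -
    assume c: "c \<noteq> al"
    have "f c \<noteq> f al" "g c \<noteq> g al" using c finj ginj by (auto dest: injD)
    then have "f c \<noteq> 1" "g c \<noteq> ?n" using fal gal by simp_all
    then have "1 < f c" "g c < ?n" using bijF(2,3)[OF bf, of c] bijF(2,3)[OF bg, of c] by auto
    then show ?thesis unfolding X_def p using fal gal by simp
  qed
  have Xom: "c \<noteq> om \<Longrightarrow> X p om c" for c
  proof -
    assume c: "c \<noteq> om"
    have "f c \<noteq> f om" "g c \<noteq> g om" using c finj ginj by (auto dest: injD)
    then have "f c \<noteq> ?n" "g c \<noteq> 1" using fom gom by simp_all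
    then have "f c < ?n" "1 < g c" using bijF(2,3)[OF bf, of c] bijF(2,3)[OF bg, of c] by auto
    then show ?thesis unfolding X_def p using fom gom by simp
  qed
  define W where "W = f -` {2..<?n}"
  have U: "UNIV = insert al (insert om W)"
  proof -
    have "c \<in> insert al (insert om W)" for c
    proof (cases "c = al \<or> c = om")
      case False
      then have "f c \<noteq> f al" "f c \<noteq> f om" using finj by (auto dest: injD)
      then have "f c \<noteq> 1" "f c \<noteq> ?n" using fal fom by simp_all
      then show ?thesis unfolding W_def using bijF(2,3)[OF bf, of c] by auto
    qed auto
    then show ?thesis by auto
  qed
  have alW: "al \<notin> insert om W" using alom fal unfolding W_def by auto
  have omW: "om \<notin> W" using fom unfolding W_def by auto
  have xa: "\<forall>c\<in>insert om W. X p al c" using Xal alW by metis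
  have xo: "\<forall>c\<in>W. X p om c" using Xom omW by metis
  have "Z p UNIV 1 = Z p (insert om W) 1 + (-1)^1 * Z p (insert om W) 2"
    unfolding U using Z_universal[OF alW xa, of 1] by (simp add: numeral_2_eq_2)
  also have "Z p (insert om W) 1 = Z p W 1 + (-1)^1 * Z p W 2"
    using Z_universal[OF omW xo, of 1] by (simp add: numeral_2_eq_2)
  also have "Z p (insert om W) 2 = Z p W 2 + (-1)^2 * Z p W 3"
    using Z_universal[OF omW xo, of 2] by (simp add: numeral_3_eq_3 numeral_2_eq_2)
  also have "Z p W 2 = Z p W 0" using Z_mod2[of p W 0] by (simp add: numeral_2_eq_2)
  also have "Z p W 3 = Z p W 1" using Z_mod2[of p W 1] by (simp add: numeral_3_eq_3)
  finally have ZU: "Z p UNIV 1 = -2 * Z p W 0" by simp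
  have pre: "j \<le> l \<Longrightarrow> f -` {2..<k j} = g -` {2..<k j} \<and>
      Z p (f -` {2..<k j}) 0 = (\<Prod>i<j. hh (k (Suc i) - k i) 0)" for j
  proof (induction j)
    case 0 then show ?case using k0 by (simp add: Z_def)
  next
    case (Suc j)
    have jl: "j < l" using Suc.prems by simp
    have IH: "f -` {2..<k j} = g -` {2..<k j}" "Z p (f -` {2..<k j}) 0 = (\<Prod>i<j. hh (k (Suc i) - k i) 0)"
      using Suc by auto
    have k2: "2 \<le> k j" "k j < k (Suc j)" using kle[of j] jl kinc by auto
    have iv: "{2..<k (Suc j)} = {2..<k j} \<union> {k j..<k (Suc j)}" using k2 by auto
    have B: "f -` {k j..<k (Suc j)} = g -` {k j..<k (Suc j)}"
      and sums: "\<forall>b\<in>f -` {k j..<k (Suc j)}. f b + g b = k j + k (Suc j) - 1" using blk[OF jl] by auto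
    have e1: "f -` {2..<k (Suc j)} = g -` {2..<k (Suc j)}" unfolding iv vimage_Un using IH(1) B by simp
    have disj: "f -` {2..<k j} \<inter> f -` {k j..<k (Suc j)} = {}" by auto
    have nox: "\<forall>a\<in>f -` {2..<k j}. \<forall>c\<in>f -` {k j..<k (Suc j)}. \<not> X p a c"
    proof (intro ballI)
      fix a c assume a: "a \<in> f -` {2..<k j}" and c: "c \<in> f -` {k j..<k (Suc j)}"
      have "g a < k j" using a IH(1) by auto
      moreover have "k j \<le> g c" using c B by auto
      moreover have "f a < k j" "k j \<le> f c" using a c by auto
      ultimately show "\<not> X p a c" unfolding X_def p by auto
    qed
    have cl: "\<forall>a\<in>f -` {k j..<k (Suc j)}. \<forall>b\<in>f -` {k j..<k (Suc j)}. a \<noteq> b \<longrightarrow> X p a b"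
    proof (intro ballI impI)
      fix a b assume a: "a \<in> f -` {k j..<k (Suc j)}" and b: "b \<in> f -` {k j..<k (Suc j)}" and ab: "a \<noteq> b"
      have "f a \<noteq> f b" using ab finj by (auto dest: injD)
      moreover have "f a + g a = f b + g b" using sums a b by simp
      ultimately show "X p a b" unfolding X_def p by auto
    qed
    have sub: "{k j..<k (Suc j)} \<subseteq> {1..?n}" using kle[of "Suc j"] Suc.prems k2 by auto
    have cB: "card (f -` {k j..<k (Suc j)}) = k (Suc j) - k j"
      using card_vimage_bij[OF bf sub] by simp
    have "Z p (f -` {2..<k (Suc j)}) 0 = Z p (f -` {2..<k j}) 0 * Z p (f -` {k j..<k (Suc j)}) 0"
      unfolding iv vimage_Un by (rule Z_split[OF disj nox])
    also have "\<dots> = (\<Prod>i<Suc j. hh (k (Suc i) - k i) 0)"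
      using IH(2) Z_clique[OF cl, of 0] cB by simp
    finally show ?case using e1 by simp
  qed
  have "W = f -` {2..<k l}" unfolding W_def kl ..
  moreover have "Z p (f -` {2..<k l}) 0 = (\<Prod>i<l. hh (k (Suc i) - k i) 0)" using pre[OF le_refl] by blast
  ultimately have "Z p W 0 = (\<Prod>i<l. hh (k (Suc i) - k i) 0)" by simp
  moreover have "(\<Prod>i<l. hh (k (Suc i) - k i) 0) = prod_list (map (\<lambda>s. hh s 0) (block_sizes l k))"
    unfolding block_sizes_def by (induction l) simp_all
  ultimately show ?thesis using ZU by simp
qed




lemma chains_ne: "chains xs \<noteq> []"
  by (induction xs) auto

lemma concat_chains: "concat (chains ss) = filter (\<lambda>x. x \<noteq> 1) ss"
proof (induction ss)
  case Nil then show ?case by simp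
next
  case (Cons x xs)
  show ?case
  proof (cases "x = 1")
    case False
    have "chains xs = hd (chains xs) # tl (chains xs)" using chains_ne[of xs] by simp
    then have "concat (chains xs) = hd (chains xs) @ concat (tl (chains xs))" by (metis concat.simps(2))
    then show ?thesis using False Cons by simp
  qed (use Cons in simp)
qed

lemma sgn_filter:
  fixes F :: "nat \<Rightarrow> int"
  assumes "F 1 > 0"
  shows "sgn (prod_list (map F ss)) = sgn (prod_list (map F (filter (\<lambda>x. x \<noteq> 1) ss)))"
  using assms by (induction ss) (auto simp: sgn_mult)

lemma prod_concat:
  fixes F :: "nat \<Rightarrow> int"
  shows "prod_list (map F (concat cs)) = prod_list (map (\<lambda>c. prod_list (map F c)) cs)"
  by (induction cs) auto

lemma prod_pos: "\<forall>x\<in>set L. (x::int) > 0 \<Longrightarrow> prod_list L > 0"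
  by (induction L) auto

lemma prod_neg:
  fixes L :: "int list"
  shows "j < length L \<Longrightarrow> L!j < 0 \<Longrightarrow> (\<forall>i<length L. i \<noteq> j \<longrightarrow> L!i > 0) \<Longrightarrow> prod_list L < 0"
proof (induction L arbitrary: j)
  case Nil then show ?case by simp
next
  case (Cons a L)
  show ?case
  proof (cases j)
    case 0
    have "\<forall>x\<in>set L. x > 0"
    proof
      fix x assume "x \<in> set L"
      then obtain i where "i < length L" "L!i = x" by (metis in_set_conv_nth)
      then show "x > 0" using Cons.prems(3)[rule_format, of "Suc i"] 0 by simp
    qed
    then have "prod_list L > 0" by (rule prod_pos)
    then show ?thesis using Cons.prems 0 by (simp add: mult_neg_pos)
  next
    case (Suc j')
    have "prod_list L < 0" using Cons.prems Suc
      by (intro Cons.IH[of j']) auto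
    moreover have "a > 0" using Cons.prems(3)[rule_format, of 0] Suc by simp
    ultimately show ?thesis by (simp add: mult_pos_neg)
  qed
qed

abbreviation FF :: "nat \<Rightarrow> int" where "FF s \<equiv> hh s 0"

lemma type2_pos:
  assumes "type2_sizes ss"
  shows "prod_list (map FF ss) > 0"
proof -
  have "\<forall>x\<in>set ss. x = 1 \<or> x = 2"
  proof
    fix x assume x: "x \<in> set ss"
    show "x = 1 \<or> x = 2"
    proof (cases "x = 1")
      case False
      then have "x \<in> set (concat (chains ss))" using x by (simp add: concat_chains)
      then obtain c where "c \<in> set (chains ss)" "x \<in> set c" by auto
      then show ?thesis using assms unfolding type2_sizes_def by (metis empty_iff list.set(1))
    qed simp
  qed
  then have "\<forall>y\<in>set (map FF ss). y > 0" using hh_vals by auto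
  then show ?thesis by (rule prod_pos)
qed

lemma chain_part_neg:
  assumes "j < length cs" "prod_list (map FF (cs!j)) < 0"
    "\<forall>i<length cs. i \<noteq> j \<longrightarrow> cs ! i \<noteq> [] \<longrightarrow> (\<forall>x\<in>set (cs ! i). x = 2)"
  shows "prod_list (map FF (concat cs)) < 0"
proof -
  let ?L = "map (\<lambda>c. prod_list (map FF c)) cs"
  have "prod_list ?L < 0"
  proof (rule prod_neg[of j])
    show "j < length ?L" using assms by simp
    show "?L!j < 0" using assms by simp
    show "\<forall>i<length ?L. i \<noteq> j \<longrightarrow> ?L!i > 0"
    proof (intro allI impI)
      fix i assume i: "i < length ?L" "i \<noteq> j"
      show "?L!i > 0"
      proof (cases "cs ! i = []")
        case True then show ?thesis using i by simp
      next
        case False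
        then have "\<forall>x\<in>set (cs!i). x = 2" using assms(3) i by simp
        then have "\<forall>y\<in>set (map FF (cs!i)). y > 0" using hh_vals by auto
        then show ?thesis using i prod_pos by simp
      qed
    qed
  qed
  then show ?thesis by (simp add: prod_concat)
qed

lemma sizes_neg:
  assumes "prod_list (map FF (concat (chains ss))) < 0"
  shows "prod_list (map FF ss) < 0"
proof -
  have "sgn (prod_list (map FF ss)) = sgn (prod_list (map FF (concat (chains ss))))"
    unfolding concat_chains by (rule sgn_filter) (simp add: hh_vals)
  then show ?thesis using assms by (simp add: sgn_if split: if_splits)
qed

lemma type4_neg:
  assumes "type4_sizes ss"
  shows "prod_list (map FF ss) < 0"
proof -
  obtain j m where j: "j < length (chains ss)" "chains ss ! j = 4 # replicate m 2"
    "\<forall>i<length (chains ss). i \<noteq> j \<longrightarrow> chains ss ! i \<noteq> [] \<longrightarrow> (\<forall>x\<in>set (chains ss ! i). x = 2)"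
    using assms unfolding type4_sizes_def Let_def by blast
  have "\<forall>y\<in>set (map FF (replicate m 2)). y > 0" using hh_vals by auto
  then have "prod_list (map FF (replicate m 2)) > 0" by (rule prod_pos)
  then have "prod_list (map FF (chains ss ! j)) < 0" using j(2) hh_vals by (simp add: mult_neg_pos)
  then show ?thesis by (rule sizes_neg[OF chain_part_neg[OF j(1) _ j(3)]])
qed

lemma type5_neg:
  assumes "type5_sizes ss"
  shows "prod_list (map FF ss) < 0"
proof -
  obtain j where j: "j < length (chains ss)" "chains ss ! j = [5]"
    "\<forall>i<length (chains ss). i \<noteq> j \<longrightarrow> chains ss ! i \<noteq> [] \<longrightarrow> chains ss ! i = [2]"
    using assms unfolding type5_sizes_def Let_def by blast
  have j3: "\<forall>i<length (chains ss). i \<noteq> j \<longrightarrow> chains ss ! i \<noteq> [] \<longrightarrow> (\<forall>x\<in>set (chains ss ! i). x = 2)"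
    using j(3) by auto
  have "prod_list (map FF (chains ss ! j)) < 0" using j(2) hh_vals by simp
  then show ?thesis by (rule sizes_neg[OF chain_part_neg[OF j(1) _ j3]])
qed

theorem corollary4p10:
  fixes p q :: "('a::finite) pair"
  assumes "CARD('a) \<ge> 2"
    and "is_pair p" and "is_pair q"
    and "standard p" and "standard q"
    and "type2 p"
    and "type4 q \<or> type5 q"
  shows "nonlabeled_ext_rauzy_class p \<noteq> nonlabeled_ext_rauzy_class q"
proof
  assume eq: "nonlabeled_ext_rauzy_class p = nonlabeled_ext_rauzy_class q"
  let ?n = "CARD('a)"
  have "pair_perm p \<in> nonlabeled_ext_rauzy_class p"
    unfolding nonlabeled_ext_rauzy_class_def labeled_ext_rauzy_class_def by auto
  then have "pair_perm p \<in> nonlabeled_ext_rauzy_class q" using eq by simp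
  then have "pair_perm p \<in> pair_perm ` {q'. rauzy_step\<^sup>*\<^sup>* q q'}"
    unfolding nonlabeled_ext_rauzy_class_def labeled_ext_rauzy_class_def by simp
  then obtain q' where q': "rauzy_step\<^sup>*\<^sup>* q q'" "pair_perm q' = pair_perm p"
    by (metis (mono_tags, lifting) imageE mem_Collect_eq)
  have n1: "1 \<le> ?n" using assms(1) by simp
  have bq1: "bij_betw (snd q) UNIV {1..?n}" using assms(3) unfolding is_pair_def by auto
  have "snd q (inv (snd q) 1) = 1" "snd q (inv (snd q) ?n) = ?n"
    using bijF(4)[OF bq1] n1 by auto
  then have d: "inv (snd q) 1 \<noteq> inv (snd q) ?n" using assms(1) by (metis numeral_le_one_iff semiring_norm(69))
  have Iq: "Inv q" unfolding Inv_def using assms(3,5) d unfolding standard_def by auto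
  have r: "Inv q' \<and> Z q' UNIV 1 = Z q UNIV 1" by (rule reach_inv[OF q'(1) Iq])
  then have "is_pair q'" unfolding Inv_def by simp
  then have "Z p UNIV 1 = Z q' UNIV 1" using Z_perm[OF assms(2), of q'] q'(2) by simp
  then have ZZ: "Z p UNIV 1 = Z q UNIV 1" using r by simp
  obtain l k where pk: "por_with p l k" "type2_sizes (block_sizes l k)" using assms(6) unfolding type2_def by blast
  have "Z p UNIV 1 < 0" using por_Z[OF assms(2,1) pk(1)] type2_pos[OF pk(2)] by simp
  moreover have "Z q UNIV 1 > 0"
  proof -
    obtain l' k' where "por_with q l' k'" "prod_list (map FF (block_sizes l' k')) < 0"
      using assms(7) type4_neg type5_neg unfolding type4_def type5_def by blast
    then show ?thesis using por_Z[OF assms(3,1)] by simp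
  qed
  ultimately show False using ZZ by simp
qed


end
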